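(* Let $(\mathcal S,\mathcal A,P,r)$ be a finite MDP such that $\mathcal P^\pi g^\star=g^\star$ for every policy $\pi$, and let $(g^\star,h^\star)$ be a solution of the modified Bellman equations. Let $V^0\in\mathbb R^n$, $V^k=\tfrac12V^{k-1}+\tfrac12TV^{k-1}$ for $k\ge1$, and let $\pi_k$ be greedy policies, $T^{\pi_k}V^k=TV^k$. Then for every $k\ge1$, \[\|g^\star-g^{\pi_k}\|_\infty\le\|TV^k-V^k-g^\star\|_\infty\le\frac{4\|V^0-h^\star\|_\infty}{\sqrt{\varpi k}},\] where $\varpi=3.141592\ldots$ is the circle constant.
   Context: An MDP $(\mathcal S,\mathcal A,P,r)$ has finite state space $\mathcal S$ ($|\mathcal S|=n$, functions identified with $\mathbb R^n$), finite action space, transition probabilities $P(s'\mid s,a)$ and bounded reward $r$. For a policy $\pi$: $r^\pi(s)=\sum_a\pi(a\mid s)r(s,a)$, $\mathcal P^\pi(s,s')=\sum_a\pi(a\mid s)P(s'\mid s,a)$, $g^\pi(s)=\liminf_{T\to\infty}\frac1T\mathbb E_\pi[\sum_{t=0}^{T-1}r(s_t,a_t)\mid s_0=s]$, $g^\star=\max_\pi g^\pi$. $T^\pi V=r^\pi+\mathcal P^\pi V$, $(TV)(s)=\max_a\{r(s,a)+\sum_{s'}P(s'\mid s,a)V(s')\}$. A pair $(g,h)$ solves the modified Bellman equations if $\max_a\sum_{s'}P(s'\mid s,a)g(s')=g(s)$ and $\max_a\{r(s,a)+\sum_{s'}P(s'\mid s,a)h(s')\}=h(s)+g(s)$ for all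 $s$, with some policy attaining both maxima simultaneously; the first component of any solution equals $g^\star$. *)

theory Defs
  imports "HOL-Analysis.Analysis"
begin

text \<open>Finite MDP: states of finite type 's, actions of finite type 'a,
  transition kernel P s a s' = P(s' | s, a), reward r s a.
  Vectors in R^n are functions 's \<Rightarrow> real.\<close>

definition is_mdp :: "('s::finite \<Rightarrow> 'a::finite \<Rightarrow> 's \<Rightarrow> real) \<Rightarrow> bool" where
  "is_mdp P \<longleftrightarrow> (\<forall>s a s'. 0 \<le> P s a s') \<and> (\<forall>s a. (\<Sum>s'\<in>UNIV. P s a s') = 1)"

text \<open>(Stationary, possibly randomized) policy: q s a = q(a | s).\<close>
definition is_policy :: "('s::finite \<Rightarrow> 'a::finite \<Rightarrow> real) \<Rightarrow> bool" where
  "is_policy q \<longleftrightarrow> (\<forall>s a. 0 \<le> q s a) \<and> (\<forall>s. (\<Sum>a\<in>UNIV. q s a) = 1)"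

definition r_pol :: "('s::finite \<Rightarrow> 'a::finite \<Rightarrow> real) \<Rightarrow> ('s \<Rightarrow> 'a \<Rightarrow> real) \<Rightarrow> 's \<Rightarrow> real" where
  "r_pol r q s = (\<Sum>a\<in>UNIV. q s a * r s a)"

definition P_pol :: "('s::finite \<Rightarrow> 'a::finite \<Rightarrow> 's \<Rightarrow> real) \<Rightarrow> ('s \<Rightarrow> 'a \<Rightarrow> real) \<Rightarrow> ('s \<Rightarrow> real) \<Rightarrow> 's \<Rightarrow> real" where
  "P_pol P q V s = (\<Sum>s'\<in>UNIV. (\<Sum>a\<in>UNIV. q s a * P s a s') * V s')"

definition T_pol :: "('s::finite \<Rightarrow> 'a::finite \<Rightarrow> 's \<Rightarrow> real) \<Rightarrow> ('s \<Rightarrow> 'a \<Rightarrow> real) \<Rightarrow> ('s \<Rightarrow> 'a \<Rightarrow> real) \<Rightarrow> ('s \<Rightarrow> real) \<Rightarrow> 's \<Rightarrow> real" where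
  "T_pol P r q V s = r_pol r q s + P_pol P q V s"

definition T_opt :: "('s::finite \<Rightarrow> 'a::finite \<Rightarrow> 's \<Rightarrow> real) \<Rightarrow> ('s \<Rightarrow> 'a \<Rightarrow> real) \<Rightarrow> ('s \<Rightarrow> real) \<Rightarrow> 's \<Rightarrow> real" where
  "T_opt P r V s = Max (range (\<lambda>a. r s a + (\<Sum>s'\<in>UNIV. P s a s' * V s')))"

text \<open>Average reward of policy q:
  g^q(s) = liminf_T (1/T) E_pi[sum_{t<T} r(s_t,a_t) | s_0 = s]
          = liminf_T (1/T) sum_{t<T} ((\<P>^q)^t r^q)(s).\<close>
definition gain :: "('s::finite \<Rightarrow> 'a::finite \<Rightarrow> 's \<Rightarrow> real) \<Rightarrow> ('s \<Rightarrow> 'a \<Rightarrow> real) \<Rightarrow> ('s \<Rightarrow> 'a \<Rightarrow> real) \<Rightarrow> 's \<Rightarrow> real" where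
  "gain P r q s = real_of_ereal (liminf (\<lambda>T::nat.
      ereal ((1 / real T) * (\<Sum>t<T. ((P_pol P q ^^ t) (r_pol r q)) s))))"

definition modified_bellman :: "('s::finite \<Rightarrow> 'a::finite \<Rightarrow> 's \<Rightarrow> real) \<Rightarrow> ('s \<Rightarrow> 'a \<Rightarrow> real) \<Rightarrow> ('s \<Rightarrow> real) \<Rightarrow> ('s \<Rightarrow> real) \<Rightarrow> bool" where
  "modified_bellman P r g h \<longleftrightarrow>
     (\<forall>s. Max (range (\<lambda>a. \<Sum>s'\<in>UNIV. P s a s' * g s')) = g s) \<and>
     (\<forall>s. Max (range (\<lambda>a. r s a + (\<Sum>s'\<in>UNIV. P s a s' * h s'))) = h s + g s) \<and>
     (\<exists>d::'s \<Rightarrow> 'a. \<forall>s. (\<Sum>s'\<in>UNIV. P s (d s) s' * g s') = g s \<and>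
                         r s (d s) + (\<Sum>s'\<in>UNIV. P s (d s) s' * h s') = h s + g s)"

definition sup_norm :: "('s::finite \<Rightarrow> real) \<Rightarrow> real" where
  "sup_norm v = Max (range (\<lambda>s. \<bar>v s\<bar>))"

end

theory Submission
  imports Defs "HOL-Analysis.Analysis"
begin

definition G :: "nat \<Rightarrow> nat \<Rightarrow> real" where
  "G n a = (\<Sum>t<a. real (n choose t))"

definition Ef :: "nat \<Rightarrow> nat \<Rightarrow> real" where
  "Ef i j = (G (i+j) (Suc j) - G (i+j) (i-1)) / 2^(i+j)"

lemma G_0[simp]: "G n 0 = 0" by (simp add: G_def)

lemma G_Suc_Suc: "G (Suc n) (Suc a) = G n (Suc a) + G n a"
proof (induction a)
  case 0 then show ?case by (simp add: G_def)
next
  case (Suc a)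
  have "G (Suc n) (Suc (Suc a)) = G (Suc n) (Suc a) + real (Suc n choose Suc a)"
    by (simp add: G_def)
  also have "\<dots> = G n (Suc a) + G n a + real (n choose a) + real (n choose Suc a)"
    using Suc by simp
  also have "\<dots> = G n (Suc (Suc a)) + G n (Suc a)" by (simp add: G_def)
  finally show ?case .
qed

lemma G_full: "G n (Suc n) = 2^n"
proof -
  have "G n (Suc n) = real (\<Sum>t\<le>n. n choose t)"
    by (simp add: G_def lessThan_Suc_atMost)
  also have "\<dots> = 2^n" by (simp add: choose_row_sum)
  finally show ?thesis .
qed

lemma Ef_0: "Ef 0 j = 1"
  by (simp add: Ef_def G_full)

lemma Ef_rec:
  assumes "1 \<le> i" "i \<le> j + 1"
  shows "Ef i j = Ef (i-1) j / 2 + (if i - 1 = j then 0 else Ef i (j-1)) / 2"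
proof (cases j)
  case 0
  then have "i = 1" using assms by simp
  then show ?thesis using 0 by (simp add: Ef_def G_def)
next
  case (Suc j')
  obtain i' where i': "i = Suc i'" using assms by (cases i) auto
  define m where "m = i' + j"
  have e1: "i + j = Suc m" using i' m_def by simp
  have e2: "(i-1) + j = m" using i' m_def by simp
  have e3: "i + (j-1) = m" using i' m_def Suc by simp
  have gA: "G (Suc m) (Suc j) = G m (Suc j) + G m j"
    using Suc G_Suc_Suc by simp
  have gB: "G (Suc m) i' = G m i' + G m (i'-1)"
    by (cases i') (simp_all add: G_Suc_Suc)
  have S: "G (i+j) (Suc j) - G (i+j) (i-1)
      = (G ((i-1)+j) (Suc j) - G ((i-1)+j) (i-1-1)) + (G (i+(j-1)) (Suc (j-1)) - G (i+(j-1)) (i-1))"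
    using e1 e2 e3 gA gB i' Suc by simp
  have Z: "i - 1 = j \<Longrightarrow> Ef i (j-1) = 0"
    using i' Suc by (simp add: Ef_def)
  define A where "A = G ((i-1)+j) (Suc j) - G ((i-1)+j) (i-1-1)"
  define B where "B = G (i+(j-1)) (Suc (j-1)) - G (i+(j-1)) (i-1)"
  have h1: "Ef i j = (A + B) / 2^(Suc m)" unfolding Ef_def using S e1 A_def B_def by simp
  have h2: "Ef (i-1) j = A / 2^m" unfolding Ef_def A_def using e2 by simp
  have h3: "Ef i (j-1) = B / 2^m" unfolding Ef_def B_def using e3 by simp
  have "Ef i j = Ef (i-1) j / 2 + Ef i (j-1) / 2"
    unfolding h1 h2 h3 by (simp add: field_simps)
  then show ?thesis using Z by auto
qed


lemma Ef_diag: assumes "1 \<le> k" shows "Ef k k \<le> 2 * (real ((2*k) choose k) / 4^k)"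
proof -
  obtain k' where k': "k = Suc k'" using assms by (cases k) auto
  have "G (k+k) (Suc k) = G (k+k) (k-1) + real ((k+k) choose k') + real ((k+k) choose k)"
    using k' by (simp add: G_def)
  then have "Ef k k = (real ((2*k) choose k') + real ((2*k) choose k)) / 4^k"
  proof -
    have f: "(2::real)^(k+k) = 4^k" by (simp add: mult_2[symmetric] power_mult)
    assume "G (k+k) (Suc k) = G (k+k) (k-1) + real ((k+k) choose k') + real ((k+k) choose k)"
    then show ?thesis unfolding Ef_def f by (simp add: mult_2)
  qed
  moreover have "(2*k) choose k' \<le> (2*k) choose k" by (rule binomial_maximum')
  ultimately show ?thesis by (simp add: divide_right_mono)
qed

definition cc :: "nat \<Rightarrow> real" where "cc n = real ((2*n) choose n) / 4^n"

lemma choose_step: "((2*n+2) choose (n+1)) * ((n+1) * (n+1)) = (2*n+2) * (2*n+1) * ((2*n) choose n)"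
proof -
  have a: "(2*n+2) * ((2*n+1) choose n) = ((2*n+2) choose (n+1)) * (n+1)"
    using Suc_times_binomial_eq[of "2*n+1" n] by simp
  have b: "(2*n+1) * ((2*n) choose n) = ((2*n+1) choose (n+1)) * (n+1)"
    using Suc_times_binomial_eq[of "2*n" n] by simp
  have c: "(2*n+1) choose (n+1) = (2*n+1) choose n"
    using binomial_symmetric[of n "2*n+1"] by simp
  show ?thesis using a b c by (metis mult.assoc mult.commute)
qed

lemma cc_Suc: "cc (Suc n) = cc n * (2*n+1) / (2*n+2)"
proof -
  define X where "X = real ((2*n+2) choose (n+1))"
  define Y where "Y = real ((2*n) choose n)"
  have "real (((2*n+2) choose (n+1)) * ((n+1) * (n+1))) = real ((2*n+2) * (2*n+1) * ((2*n) choose n))"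
    using choose_step[of n] by (simp only:)
  then have e: "X * ((real n+1)*(real n+1)) = (2*real n+2) * (2*real n+1) * Y"
    unfolding X_def Y_def by (simp only: of_nat_mult of_nat_add of_nat_1 of_nat_numeral)
  have pos: "(real n+1)*(real n+1) > 0" by (simp add: add_pos_nonneg)
  have X: "X = 2 * (2*real n+1) * Y / (real n+1)"
  proof -
    have "X = (2*real n+2) * (2*real n+1) * Y / ((real n+1)*(real n+1))"
      using e pos by (simp add: eq_divide_eq)
    also have "\<dots> = 2 * (2*real n+1) * Y / (real n+1)"
      using pos by (simp add: field_simps)
    finally show ?thesis .
  qed
  have "2 * Suc n = 2*n+2" by simp
  then have c1: "cc (Suc n) = X / 4^(Suc n)" unfolding cc_def X_def by (simp del: binomial_Suc_Suc)
  have c2: "cc n = Y / 4^n" unfolding cc_def Y_def by simp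
  have gen: "\<And>u m Z. m \<noteq> 0 \<Longrightarrow> Z \<noteq> 0 \<Longrightarrow> 2 * u * Y / m / (4*Z) = Y/Z * u / (2*m)"
    by (simp add: field_simps)
  have "cc (Suc n) = Y / 4^n * (2*real n+1) / (2*(real n+1))"
    unfolding c1 X using gen[of "real n + 1" "4^n" "2*real n+1"] by (simp add: add_pos_nonneg)
  then show ?thesis unfolding c2 by (simp add: algebra_simps)
qed

definition pw :: "nat \<Rightarrow> real" where "pw n = (\<Prod>k=1..n. (4*real k^2) / (4*real k^2 - 1))"

lemma cc_pw: "cc n ^ 2 * (2*n+1) * pw n = 1"
proof (induction n)
  case 0 then show ?case by (simp add: cc_def pw_def)
next
  case (Suc n)
  have p: "pw (Suc n) = pw n * (4*real (Suc n)^2) / (4*real (Suc n)^2 - 1)"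
    unfolding pw_def by (simp add: prod.nat_ivl_Suc' mult.commute)
  have ne: "4*real (Suc n)^2 - 1 \<noteq> 0"
  proof -
    have "4*real (Suc n)^2 \<ge> 4" by simp
    then show ?thesis by linarith
  qed
  have f: "4*real (Suc n)^2 - 1 = (2*n+1)*(2*n+3)" by (simp add: power2_eq_square algebra_simps)
  have gen: "\<And>x1 x2 x3 c p::real. x1 \<noteq> 0 \<Longrightarrow> x2 \<noteq> 0 \<Longrightarrow> x3 \<noteq> 0 \<Longrightarrow>
      (c*x1/x2)^2 * x3 * (p*x2^2/(x1*x3)) = c^2*x1*p"
    by (simp add: field_simps power2_eq_square)
  have p2: "pw (Suc n) = pw n*(2*real n+2)^2/((2*real n+1)*(2*real n+3))"
    unfolding pw_def by (simp add: prod.nat_ivl_Suc' power2_eq_square algebra_simps)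
  have "cc (Suc n) ^ 2 * (2 * real (Suc n) + 1) * pw (Suc n)
     = (cc n*(2*real n+1)/(2*real n+2))^2 * (2*real n+3) * (pw n*(2*real n+2)^2/((2*real n+1)*(2*real n+3)))"
    unfolding cc_Suc p2 by (simp add: algebra_simps)
  also have "\<dots> = cc n ^ 2 * (2*real n+1) * pw n"
    by (rule gen) (simp_all add: add_pos_nonneg)
  finally have "cc (Suc n) ^ 2 * (2 * real (Suc n) + 1) * pw (Suc n) = cc n ^ 2 * (2*real n+1) * pw n" .
  then show ?case using Suc by (simp add: add.commute)
qed

lemma pw_pos: "pw n > 0"
  unfolding pw_def
proof (intro prod_pos ballI)
  fix k assume "k \<in> {1..n}"
  then have "4*real k^2 \<ge> 4" by simp
  then show "0 < 4 * real k ^ 2 / (4 * real k ^ 2 - 1)" by (intro divide_pos_pos; linarith)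
qed

definition vw :: "nat \<Rightarrow> real" where "vw n = pw n * (2*n+1) / (2*n)"

lemma vw_dec: assumes "1 \<le> n" shows "vw (Suc n) \<le> vw n"
proof -
  have p: "pw (Suc n) = pw n * (4*real (Suc n)^2) / ((2*n+1)*(2*n+3))"
    unfolding pw_def by (simp add: prod.nat_ivl_Suc' mult.commute power2_eq_square algebra_simps)
  have pp: "pw n > 0" by (rule pw_pos)
  have gen: "\<And>x1 x2 x3 p::real. x1 \<noteq> 0 \<Longrightarrow> x2 \<noteq> 0 \<Longrightarrow> x3 \<noteq> 0 \<Longrightarrow>
      p*x2^2/(x1*x3) * x3 / x2 = p * (x2 / x1)"
    by (simp add: field_simps power2_eq_square)
  have f2: "4*real (Suc n)^2 = (2*real n+2)^2" by (simp add: power2_eq_square algebra_simps)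
  have "vw (Suc n) = pw n*(2*real n+2)^2/((2*real n+1)*(2*real n+3)) * (2*real n+3) / (2*real n+2)"
    unfolding vw_def p f2 by (simp add: algebra_simps)
  also have "\<dots> = pw n * ((2*real n+2) / (2*real n+1))"
    by (rule gen) (simp_all add: add_pos_nonneg)
  also have "\<dots> = pw n * (2*(real n+1) / (2*real n+1))" by (simp add: algebra_simps)
  also have "\<dots> \<le> pw n * ((2*real n+1) / (2*real n))"
  proof (rule mult_left_mono)
    have key: "2*(real n+1) * (2*real n) \<le> (2*real n+1) * (2*real n+1)" by (simp add: algebra_simps)
    have d1: "0 < 2*real n+1" "0 < 2*real n" using assms by auto
    have e1: "2*(real n+1)/(2*real n+1) = (2*(real n+1)*(2*real n)) / ((2*real n+1)*(2*real n))"
      by (rule nonzero_mult_divide_mult_cancel_right[symmetric]) (use d1 in auto)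
    have e2: "(2*real n+1)/(2*real n) = ((2*real n+1)*(2*real n+1))/((2*real n+1)*(2*real n))"
      by (rule nonzero_mult_divide_mult_cancel_left[symmetric]) (use d1 in auto)
    have "2*(real n+1) / (2*real n+1) \<le> (2*real n+1) / (2*real n)"
      unfolding e1 e2 using key d1 by (intro divide_right_mono) auto
    then show "2*(real n+1) / (2*real n+1) \<le> (2*real n+1) / (2*real n)" .
  qed (use pp in simp)
  also have "\<dots> = vw n" unfolding vw_def by simp
  finally show ?thesis .
qed

lemma vw_lim: "vw \<longlonglongrightarrow> pi / 2"
proof -
  have w: "pw \<longlonglongrightarrow> pi/2" using wallis unfolding pw_def by simp
  have q: "(\<lambda>n. (2*real n+1) / (2*real n)) \<longlonglongrightarrow> 1"
  proof -
    have "(\<lambda>n. 1 + inverse (2 * real n)) \<longlonglongrightarrow> 1 + 0"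
      by (intro tendsto_intros tendsto_inverse_0_at_top filterlim_tendsto_pos_mult_at_top[of _ 2]
         filterlim_real_sequentially) auto
    moreover have "eventually (\<lambda>n. 1 + inverse (2 * real n) = (2*real n+1) / (2*real n)) sequentially"
      using eventually_gt_at_top[of 0] by eventually_elim (simp add: field_simps)
    ultimately show ?thesis by (simp add: tendsto_cong)
  qed
  have "(\<lambda>n. pw n * ((2*real n+1) / (2*real n))) \<longlonglongrightarrow> pi/2 * 1"
    by (intro tendsto_mult w q)
  moreover have "vw = (\<lambda>n. pw n * ((2*real n+1) / (2*real n)))"
    by (rule ext) (simp add: vw_def)
  ultimately show ?thesis by simp
qed

lemma vw_ge: assumes "1 \<le> n" shows "pi / 2 \<le> vw n"
proof -
  have "\<forall>m\<ge>n. vw m \<le> vw n"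
  proof (intro allI impI)
    fix m assume "n \<le> m"
    then show "vw m \<le> vw n"
    proof (induction m rule: dec_induct)
      case (step m) then show ?case using vw_dec[of m] assms by linarith
    qed simp
  qed
  then show ?thesis using LIMSEQ_le_const2[OF vw_lim] by blast
qed

lemma cc_bound: assumes "1 \<le> n" shows "cc n \<le> 1 / sqrt (pi * n)"
proof -
  have pp: "pw n > 0" by (rule pw_pos)
  have c1: "cc n ^ 2 * ((2*n+1) * pw n) = 1" using cc_pw[of n] by (simp add: mult.assoc)
  have c2: "cc n ^ 2 = 1 / ((2*n+1) * pw n)" using c1 pp
    by (simp add: eq_divide_eq)
  have "(2*n+1) * pw n = 2 * n * vw n" unfolding vw_def using assms by (simp add: field_simps)
  also have "\<dots> \<ge> 2 * n * (pi/2)" using vw_ge[OF assms] by (intro mult_left_mono) auto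
  finally have "(2*n+1) * pw n \<ge> pi * n" by (simp add: mult.commute)
  then have "cc n ^ 2 \<le> 1 / (pi * n)" unfolding c2 using assms
    using pp by (intro divide_left_mono) (auto intro!: mult_pos_pos)
  moreover have "cc n \<ge> 0" unfolding cc_def by simp
  ultimately have "cc n \<le> sqrt (1 / (pi * n))" by (simp add: real_le_rsqrt)
  then show ?thesis by (simp add: real_sqrt_divide)
qed


lemma KM_abstract:
  fixes dd :: "'v \<Rightarrow> 'v \<Rightarrow> real" and mid :: "'v \<Rightarrow> 'v \<Rightarrow> 'v"
    and U :: "'v \<Rightarrow> 'v" and x :: "nat \<Rightarrow> 'v"
  assumes tri: "\<And>a b c. dd a c \<le> dd a b + dd b c"
    and sym: "\<And>a b. dd a b = dd b a"
    and rfl: "\<And>a. dd a a = 0"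
    and conv: "\<And>a b c. dd (mid a b) c \<le> dd a c / 2 + dd b c / 2"
    and ne: "\<And>a b. dd (U a) (U b) \<le> dd a b"
    and fx: "U p = p"
    and it: "\<And>n. x (Suc n) = mid (x n) (U (x n))"
  shows "dd (x k) (U (x k)) \<le> 2 * dd (x 0) p * Ef k k"
proof -
  define c where "c = 2 * dd (x 0) p"
  have xp: "dd (x n) p \<le> dd (x 0) p" for n
  proof (induction n)
    case (Suc n)
    have "dd (x (Suc n)) p \<le> dd (x n) p / 2 + dd (U (x n)) p / 2"
      unfolding it by (rule conv)
    also have "dd (U (x n)) p \<le> dd (x n) p" using ne[of "x n" p] fx by simp
    finally show ?case using Suc by simp
  qed simp
  have base: "dd (x 0) (U (x j)) \<le> c" for j
  proof -
    have "dd (x 0) (U (x j)) \<le> dd (x 0) p + dd p (U (x j))" by (rule tri)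
    also have "dd p (U (x j)) \<le> dd (x j) p" using ne[of p "x j"] fx sym by metis
    finally show ?thesis using xp[of j] c_def by simp
  qed
  have main: "\<forall>i j. i + j = s \<longrightarrow>
      (i \<le> j + 1 \<longrightarrow> dd (x i) (U (x j)) \<le> c * Ef i j) \<and>
      (i < j \<longrightarrow> dd (x i) (x j) \<le> c * Ef (i+1) (j-1))" for s
  proof (induction s rule: less_induct)
    case (less s)
    show ?case
    proof (intro allI impI conjI)
      fix i j assume s: "i + j = s"
      {
        assume ij: "i \<le> j + 1"
        show "dd (x i) (U (x j)) \<le> c * Ef i j"
        proof (cases i)
          case 0 then show ?thesis using base by (simp add: Ef_0)
        next
          case (Suc i')
          have r: "Ef i j = Ef i' j / 2 + (if i' = j then 0 else Ef i (j-1)) / 2"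
            using Ef_rec[of i j] ij Suc by simp
          have "dd (x i) (U (x j)) \<le> dd (x i') (U (x j)) / 2 + dd (U (x i')) (U (x j)) / 2"
            unfolding Suc it by (rule conv)
          also have "dd (x i') (U (x j)) \<le> c * Ef i' j"
            using less.IH[of "i' + j"] s Suc ij by auto
          also have "dd (U (x i')) (U (x j)) \<le> (if i' = j then 0 else c * Ef i (j-1))"
          proof (cases "i' = j")
            case True then show ?thesis using rfl by simp
          next
            case False
            then have "i' < j" using ij Suc by simp
            then have "dd (x i') (x j) \<le> c * Ef (i'+1) (j-1)"
              using less.IH[of "i' + j"] s Suc by auto
            then show ?thesis using ne[of "x i'" "x j"] False Suc by simp
          qed
          finally show ?thesis unfolding r by (simp add: algebra_simps split: if_splits)
        qed
      }
      {
        assume ij: "i < j"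
        then obtain j' where j': "j = Suc j'" by (cases j) auto
        have r: "Ef (i+1) j' = Ef i j' / 2 + (if i = j' then 0 else Ef (i+1) (j'-1)) / 2"
          using Ef_rec[of "i+1" j'] ij j' by simp
        have "dd (x i) (x j) = dd (x j) (x i)" by (rule sym)
        also have "\<dots> \<le> dd (x j') (x i) / 2 + dd (U (x j')) (x i) / 2"
          unfolding j' it by (rule conv)
        also have "dd (x j') (x i) \<le> (if i = j' then 0 else c * Ef (i+1) (j'-1))"
        proof (cases "i = j'")
          case True then show ?thesis using rfl by simp
        next
          case False
          then have "i < j'" using ij j' by simp
          then have "dd (x i) (x j') \<le> c * Ef (i+1) (j'-1)"
            using less.IH[of "i + j'"] s j' by auto
          then show ?thesis using False sym by simp
        qed
        also have "dd (U (x j')) (x i) \<le> c * Ef i j'"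
          using less.IH[of "i + j'"] s j' ij sym by auto
        finally have "dd (x i) (x j) \<le> c * Ef (i+1) j'"
          unfolding r by (simp add: algebra_simps split: if_splits)
        then show "dd (x i) (x j) \<le> c * Ef (i+1) (j-1)" using j' by simp
      }
    qed
  qed
  show ?thesis using main[of "k+k"] c_def by simp
qed


lemma sn_ge: "\<bar>v s\<bar> \<le> sup_norm (v :: 's::finite \<Rightarrow> real)"
  unfolding sup_norm_def by (rule Max_ge) auto

lemma sn_le: "(\<And>s. \<bar>v s\<bar> \<le> B) \<Longrightarrow> sup_norm (v :: 's::finite \<Rightarrow> real) \<le> B"
  unfolding sup_norm_def by (subst Max_le_iff) auto

lemma sn_nonneg: "0 \<le> sup_norm (v :: 's::finite \<Rightarrow> real)"
  using sn_ge[of v undefined] by simp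

definition dd :: "('s::finite \<Rightarrow> real) \<Rightarrow> ('s \<Rightarrow> real) \<Rightarrow> real" where
  "dd f g = sup_norm (\<lambda>s. f s - g s)"

definition mid :: "('s \<Rightarrow> real) \<Rightarrow> ('s \<Rightarrow> real) \<Rightarrow> 's \<Rightarrow> real" where
  "mid f g = (\<lambda>s. (1/2) * f s + (1/2) * g s)"

lemma dd_tri: "dd a c \<le> dd a b + dd b c"
  unfolding dd_def
proof (rule sn_le)
  fix s
  have "\<bar>a s - c s\<bar> \<le> \<bar>a s - b s\<bar> + \<bar>b s - c s\<bar>" by simp
  also have "\<dots> \<le> sup_norm (\<lambda>s. a s - b s) + sup_norm (\<lambda>s. b s - c s)"
    using sn_ge[of "\<lambda>s. a s - b s" s] sn_ge[of "\<lambda>s. b s - c s" s] by simp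
  finally show "\<bar>a s - c s\<bar> \<le> \<dots>" .
qed

lemma dd_sym: "dd a b = dd b a"
  unfolding dd_def sup_norm_def by (simp add: abs_minus_commute)

lemma dd_rfl: "dd a a = 0"
  unfolding dd_def sup_norm_def by simp

lemma dd_conv: "dd (mid a b) c \<le> dd a c / 2 + dd b c / 2"
  unfolding dd_def mid_def
proof (rule sn_le)
  fix s
  have "\<bar>1/2 * a s + 1/2 * b s - c s\<bar> = \<bar>(a s - c s)/2 + (b s - c s)/2\<bar>" by argo
  also have "\<dots> \<le> \<bar>a s - c s\<bar>/2 + \<bar>b s - c s\<bar>/2"
    using abs_triangle_ineq[of "(a s - c s)/2" "(b s - c s)/2"] by simp
  also have "\<dots> \<le> sup_norm (\<lambda>s. a s - c s)/2 + sup_norm (\<lambda>s. b s - c s)/2"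
    using sn_ge[of "\<lambda>s. a s - c s" s] sn_ge[of "\<lambda>s. b s - c s" s] by simp
  finally show "\<bar>1/2 * a s + 1/2 * b s - c s\<bar> \<le> \<dots>" .
qed

lemma stoch_bound:
  fixes m :: "'s::finite \<Rightarrow> real"
  assumes "\<And>s'. 0 \<le> m s'" "(\<Sum>s'\<in>UNIV. m s') = 1" "\<And>s'. \<bar>w s'\<bar> \<le> B"
  shows "\<bar>\<Sum>s'\<in>UNIV. m s' * w s'\<bar> \<le> B"
proof -
  have "\<bar>\<Sum>s'\<in>UNIV. m s' * w s'\<bar> \<le> (\<Sum>s'\<in>UNIV. \<bar>m s' * w s'\<bar>)" by (rule sum_abs)
  also have "\<dots> \<le> (\<Sum>s'\<in>UNIV. m s' * B)"
    by (intro sum_mono) (use assms in \<open>auto simp: abs_mult intro: mult_left_mono\<close>)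
  also have "\<dots> = B" using assms(2) by (simp add: sum_distrib_right[symmetric])
  finally show ?thesis .
qed

lemma row_bound:
  assumes "is_mdp P" "\<And>s'. \<bar>w s'\<bar> \<le> B"
  shows "\<bar>\<Sum>s'\<in>UNIV. P s a s' * w s'\<bar> \<le> B"
  using assms by (intro stoch_bound) (auto simp: is_mdp_def)

lemma Ppol_bound:
  assumes "is_mdp P" "is_policy q" "\<And>s'. \<bar>w s'\<bar> \<le> B"
  shows "\<bar>P_pol P q w s\<bar> \<le> B"
  unfolding P_pol_def
proof (rule stoch_bound)
  show "0 \<le> (\<Sum>a\<in>UNIV. q s a * P s a s')" for s'
    using assms by (intro sum_nonneg) (auto simp: is_mdp_def is_policy_def)
  have "(\<Sum>s'\<in>UNIV. \<Sum>a\<in>UNIV. q s a * P s a s') = (\<Sum>a\<in>UNIV. q s a * (\<Sum>s'\<in>UNIV. P s a s'))"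
    by (subst sum.swap) (simp add: sum_distrib_left)
  also have "\<dots> = 1" using assms by (simp add: is_mdp_def is_policy_def)
  finally show "(\<Sum>s'\<in>UNIV. \<Sum>a\<in>UNIV. q s a * P s a s') = 1" .
qed (use assms in auto)

lemma Max_range_ge: "f a \<le> Max (range (f :: 'a::finite \<Rightarrow> real))"
  by (rule Max_ge) auto

lemma Max_range_le: "(\<And>a. f a \<le> B) \<Longrightarrow> Max (range (f :: 'a::finite \<Rightarrow> real)) \<le> B"
  by (subst Max_le_iff) auto

lemma T_opt_nonexp:
  assumes "is_mdp P"
  shows "\<bar>T_opt P r V s - T_opt P r W s\<bar> \<le> dd V W"
proof -
  have k: "\<bar>(\<Sum>s'\<in>UNIV. P s a s' * V s') - (\<Sum>s'\<in>UNIV. P s a s' * W s')\<bar> \<le> dd V W" for a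
  proof -
    have "(\<Sum>s'\<in>UNIV. P s a s' * V s') - (\<Sum>s'\<in>UNIV. P s a s' * W s') = (\<Sum>s'\<in>UNIV. P s a s' * (V s' - W s'))"
      by (simp add: sum_subtractf right_diff_distrib)
    also have "\<bar>\<dots>\<bar> \<le> dd V W" unfolding dd_def
      by (rule row_bound[OF assms]) (rule sn_ge)
    finally show ?thesis .
  qed
  have a: "T_opt P r V s \<le> T_opt P r W s + dd V W"
    unfolding T_opt_def
  proof (rule Max_range_le)
    fix a
    have "r s a + (\<Sum>s'\<in>UNIV. P s a s' * W s') \<le> Max (range (\<lambda>a. r s a + (\<Sum>s'\<in>UNIV. P s a s' * W s')))"
      by (rule Max_range_ge)
    then show "r s a + (\<Sum>s'\<in>UNIV. P s a s' * V s') \<le> Max (range (\<lambda>a. r s a + (\<Sum>s'\<in>UNIV. P s a s' * W s'))) + dd V W"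
      using k[of a] by linarith
  qed
  have b: "T_opt P r W s \<le> T_opt P r V s + dd V W"
    unfolding T_opt_def
  proof (rule Max_range_le)
    fix a
    have "r s a + (\<Sum>s'\<in>UNIV. P s a s' * V s') \<le> Max (range (\<lambda>a. r s a + (\<Sum>s'\<in>UNIV. P s a s' * V s')))"
      by (rule Max_range_ge)
    then show "r s a + (\<Sum>s'\<in>UNIV. P s a s' * W s') \<le> Max (range (\<lambda>a. r s a + (\<Sum>s'\<in>UNIV. P s a s' * V s'))) + dd V W"
      using k[of a] by linarith
  qed
  show ?thesis using a b by linarith
qed

lemma T_opt_shift:
  assumes Pg: "\<And>s a. (\<Sum>s'\<in>UNIV. P s a s' * g s') = g s"
  shows "T_opt P r (\<lambda>s. W s + c * g s) s = T_opt P r W s + c * g s"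
proof -
  have e: "(\<lambda>a. r s a + (\<Sum>s'\<in>UNIV. P s a s' * (W s' + c * g s'))) = (\<lambda>a. (r s a + (\<Sum>s'\<in>UNIV. P s a s' * W s')) + c * g s)"
  proof
    fix a
    have "(\<Sum>s'\<in>UNIV. P s a s' * (W s' + c * g s')) = (\<Sum>s'\<in>UNIV. P s a s' * W s') + c * (\<Sum>s'\<in>UNIV. P s a s' * g s')"
      by (simp add: distrib_left sum.distrib sum_distrib_left mult.left_commute)
    then show "r s a + (\<Sum>s'\<in>UNIV. P s a s' * (W s' + c * g s')) = (r s a + (\<Sum>s'\<in>UNIV. P s a s' * W s')) + c * g s"
      using Pg[of s a] by simp
  qed
  define f where "f = (\<lambda>a. r s a + (\<Sum>s'\<in>UNIV. P s a s' * W s'))"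
  have "Max (range (\<lambda>a. f a + c * g s)) = Max (range f) + c * g s"
  proof (rule antisym)
    show "Max (range (\<lambda>a. f a + c * g s)) \<le> Max (range f) + c * g s"
      by (rule Max_range_le) (use Max_range_ge[of f] in simp)
    have "Max (range f) \<le> Max (range (\<lambda>a. f a + c * g s)) - c * g s"
    proof (rule Max_range_le)
      fix a show "f a \<le> Max (range (\<lambda>a. f a + c * g s)) - c * g s"
        using Max_range_ge[of "\<lambda>a. f a + c * g s" a] by linarith
    qed
    then show "Max (range f) + c * g s \<le> Max (range (\<lambda>a. f a + c * g s))" by linarith
  qed
  then show ?thesis unfolding T_opt_def e f_def .
qed


lemma Ppol_add: "P_pol P q (\<lambda>s. a s + b s) = (\<lambda>s. P_pol P q a s + P_pol P q b s)"
  unfolding P_pol_def by (simp add: distrib_left sum.distrib)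

lemma Ppol_diff: "P_pol P q (\<lambda>s. a s - b s) = (\<lambda>s. P_pol P q a s - P_pol P q b s)"
  unfolding P_pol_def by (simp add: right_diff_distrib sum_subtractf)

lemma Ppow_add: "(P_pol P q ^^ t) (\<lambda>s. a s + b s) = (\<lambda>s. (P_pol P q ^^ t) a s + (P_pol P q ^^ t) b s)"
  by (induction t) (simp_all add: Ppol_add)

lemma Ppow_diff: "(P_pol P q ^^ t) (\<lambda>s. a s - b s) = (\<lambda>s. (P_pol P q ^^ t) a s - (P_pol P q ^^ t) b s)"
  by (induction t) (simp_all add: Ppol_diff)

lemma Ppow_fix: "P_pol P q g = g \<Longrightarrow> (P_pol P q ^^ t) g = g"
  by (induction t) simp_all

lemma Ppow_bound:
  assumes "is_mdp P" "is_policy q"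
  shows "\<bar>(P_pol P q ^^ t) v s\<bar> \<le> sup_norm v"
proof (induction t arbitrary: s)
  case 0 then show ?case by (simp add: sn_ge)
next
  case (Suc t)
  then show ?case by (simp add: Ppol_bound[OF assms])
qed

lemma ereal_between:
  assumes "ereal a \<le> L" "L \<le> ereal b"
  shows "a \<le> real_of_ereal L \<and> real_of_ereal L \<le> b"
  using assms by (cases L) auto

lemma gain_bound:
  assumes mdp: "is_mdp P" and q: "is_policy q" and Pg: "P_pol P q g = g"
    and eq: "T_pol P r q V = T_opt P r V"
  shows "\<bar>g s - gain P r q s\<bar> \<le> sup_norm (\<lambda>s. T_opt P r V s - V s - g s)"
proof -
  define Q where "Q = P_pol P q"
  define e where "e = (\<lambda>s. T_opt P r V s - V s - g s)"
  define \<epsilon> where "\<epsilon> = sup_norm e"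
  define M where "M = sup_norm V"
  have rq: "r_pol r q = (\<lambda>s. (V s + g s + e s) - Q V s)"
  proof
    fix s
    have "r_pol r q s + Q V s = T_opt P r V s" using fun_cong[OF eq, of s]
      unfolding T_pol_def Q_def by simp
    then show "r_pol r q s = (V s + g s + e s) - Q V s" unfolding e_def by simp
  qed
  have QT: "(Q^^t) g = g" for t using Ppow_fix[OF Pg] Q_def by simp
  have step: "(Q^^t) (r_pol r q) s = (Q^^t) V s + g s + (Q^^t) e s - (Q^^Suc t) V s" for t
  proof -
    have "(Q^^t) (r_pol r q) s = (Q^^t) V s + (Q^^t) g s + (Q^^t) e s - (Q^^t) (Q V) s"
      unfolding rq Q_def by (simp add: Ppow_diff Ppow_add)
    also have "(Q^^t) (Q V) = (Q^^Suc t) V" by (simp add: funpow_Suc_right del: funpow.simps)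
    finally show ?thesis using QT by simp
  qed
  have ident: "(\<Sum>t<T. (Q^^t) (r_pol r q) s) = V s - (Q^^T) V s + real T * g s + (\<Sum>t<T. (Q^^t) e s)" for T
  proof (induction T)
    case 0 then show ?case by simp
  next
    case (Suc T)
    then show ?case using step[of T] by (simp add: algebra_simps)
  qed
  have Mnn: "0 \<le> M" unfolding M_def by (rule sn_nonneg)
  have bnd: "\<bar>(1 / real T) * (\<Sum>t<T. (Q^^t) (r_pol r q) s) - g s\<bar> \<le> \<epsilon> + 2 * M / real T"
    if T: "T \<ge> 1" for T
  proof -
    have Tp: "real T > 0" using T by simp
    have "(1 / real T) * (\<Sum>t<T. (Q^^t) (r_pol r q) s) - g s
        = (V s - (Q^^T) V s) / real T + (\<Sum>t<T. (Q^^t) e s) / real T"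
      unfolding ident using Tp by (simp add: field_simps)
    also have "\<bar>\<dots>\<bar> \<le> \<bar>V s - (Q^^T) V s\<bar> / real T + \<bar>\<Sum>t<T. (Q^^t) e s\<bar> / real T"
      using abs_triangle_ineq[of "(V s - (Q^^T) V s) / real T" "(\<Sum>t<T. (Q^^t) e s) / real T"] Tp
      by simp
    also have "\<bar>V s - (Q^^T) V s\<bar> \<le> 2 * M"
    proof -
      have "\<bar>V s\<bar> \<le> M" unfolding M_def by (rule sn_ge)
      moreover have "\<bar>(Q^^T) V s\<bar> \<le> M" unfolding M_def Q_def by (rule Ppow_bound[OF mdp q])
      ultimately show ?thesis by linarith
    qed
    also have "\<bar>\<Sum>t<T. (Q^^t) e s\<bar> \<le> real T * \<epsilon>"
    proof -
      have "\<bar>\<Sum>t<T. (Q^^t) e s\<bar> \<le> (\<Sum>t<T. \<bar>(Q^^t) e s\<bar>)" by (rule sum_abs)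
      also have "\<dots> \<le> (\<Sum>t<T. \<epsilon>)"
        by (intro sum_mono) (unfold \<epsilon>_def Q_def, rule Ppow_bound[OF mdp q])
      finally show ?thesis by simp
    qed
    finally show ?thesis using Tp by (simp add: field_simps)
  qed
  define f where "f = (\<lambda>T::nat. ereal ((1 / real T) * (\<Sum>t<T. ((P_pol P q ^^ t) (r_pol r q)) s)))"
  have lo: "eventually (\<lambda>T. ereal (g s - \<epsilon> - 2 * M / real T) \<le> f T) sequentially"
    using eventually_ge_at_top[of 1]
  proof eventually_elim
    case (elim T)
    show ?case using bnd[OF elim] unfolding f_def Q_def ereal_less_eq(3) abs_le_iff by linarith
  qed
  have hi: "eventually (\<lambda>T. f T \<le> ereal (g s + \<epsilon> + 2 * M / real T)) sequentially"
    using eventually_ge_at_top[of 1]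
  proof eventually_elim
    case (elim T)
    show ?case using bnd[OF elim] unfolding f_def Q_def ereal_less_eq(3) abs_le_iff by linarith
  qed
  have z: "(\<lambda>T. 2 * M / real T) \<longlonglongrightarrow> 0"
    by (intro tendsto_divide_0[OF tendsto_const] filterlim_at_top_imp_at_infinity filterlim_real_sequentially)
  have l1: "(\<lambda>T. g s - \<epsilon> - 2 * M / real T) \<longlonglongrightarrow> g s - \<epsilon> - 0"
    by (intro tendsto_intros z)
  have l2: "(\<lambda>T. g s + \<epsilon> + 2 * M / real T) \<longlonglongrightarrow> g s + \<epsilon> + 0"
    by (intro tendsto_intros z)
  have L1: "liminf (\<lambda>T. ereal (g s - \<epsilon> - 2 * M / real T)) = ereal (g s - \<epsilon>)"
    by (rule lim_imp_Liminf) (use l1 in simp_all)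
  have L2: "liminf (\<lambda>T. ereal (g s + \<epsilon> + 2 * M / real T)) = ereal (g s + \<epsilon>)"
    by (rule lim_imp_Liminf) (use l2 in simp_all)
  have "ereal (g s - \<epsilon>) \<le> liminf f" using Liminf_mono[OF lo] L1 by simp
  moreover have "liminf f \<le> ereal (g s + \<epsilon>)" using Liminf_mono[OF hi] L2 by simp
  ultimately have "g s - \<epsilon> \<le> gain P r q s \<and> gain P r q s \<le> g s + \<epsilon>"
    unfolding gain_def f_def[symmetric] by (rule ereal_between)
  then show ?thesis unfolding \<epsilon>_def e_def by linarith
qed

theorem corollary1:
  fixes P :: "'s::finite \<Rightarrow> 'a::finite \<Rightarrow> 's \<Rightarrow> real"
    and r :: "'s \<Rightarrow> 'a \<Rightarrow> real"
    and g h :: "'s \<Rightarrow> real"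
    and V :: "nat \<Rightarrow> 's \<Rightarrow> real"
    and pol :: "nat \<Rightarrow> 's \<Rightarrow> 'a \<Rightarrow> real"
  assumes mdp: "is_mdp P"
    and inv: "\<And>q. is_policy q \<Longrightarrow> P_pol P q g = g"
    and sol: "modified_bellman P r g h"
    and iter: "\<And>k. V (Suc k) = (\<lambda>s. (1/2) * V k s + (1/2) * T_opt P r (V k) s)"
    and pol_ok: "\<And>k. k \<ge> 1 \<Longrightarrow> is_policy (pol k)"
    and greedy: "\<And>k. k \<ge> 1 \<Longrightarrow> T_pol P r (pol k) (V k) = T_opt P r (V k)"
  shows "\<forall>k\<ge>1.
    sup_norm (\<lambda>s. g s - gain P r (pol k) s)
      \<le> sup_norm (\<lambda>s. T_opt P r (V k) s - V k s - g s) \<and>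
    sup_norm (\<lambda>s. T_opt P r (V k) s - V k s - g s)
      \<le> 4 * sup_norm (\<lambda>s. V 0 s - h s) / sqrt (pi * real k)"
proof -
  have Pg: "(\<Sum>s'\<in>UNIV. P s a s' * g s') = g s" for s a
  proof -
    define q where "q = (\<lambda>(s::'s) (b::'a). if b = a then 1 else (0::real))"
    have qp: "is_policy q" unfolding is_policy_def q_def by simp
    have inner: "(\<Sum>b\<in>UNIV. q s b * P s b s') = P s a s'" for s'
    proof -
      have "(\<Sum>b\<in>UNIV. q s b * P s b s') = (\<Sum>b\<in>UNIV. if b = a then P s a s' else 0)"
        by (rule sum.cong) (auto simp: q_def)
      also have "\<dots> = P s a s'" by simp
      finally show ?thesis .
    qed
    have "P_pol P q g s = (\<Sum>s'\<in>UNIV. P s a s' * g s')"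
      unfolding P_pol_def inner ..
    then show ?thesis using inv[OF qp] by simp
  qed
  have fixh: "T_opt P r h s = h s + g s" for s
  proof -
    have "\<forall>s. Max (range (\<lambda>a. r s a + (\<Sum>s'\<in>UNIV. P s a s' * h s'))) = h s + g s"
      using sol unfolding modified_bellman_def by (elim conjE)
    then show ?thesis unfolding T_opt_def by simp
  qed
  define U where "U = (\<lambda>W s. T_opt P r W s - g s)"
  define W where "W = (\<lambda>k s. V k s - real k / 2 * g s)"
  have Vk: "V k = (\<lambda>s. W k s + (real k / 2) * g s)" for k
    unfolding W_def by simp
  have TV: "T_opt P r (V k) s = T_opt P r (W k) s + real k / 2 * g s" for k s
    unfolding Vk[of k] by (rule T_opt_shift[OF Pg])
  have Wit: "W (Suc k) = mid (W k) (U (W k))" for k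
  proof
    fix s
    have "W (Suc k) s = 1/2 * V k s + 1/2 * T_opt P r (V k) s - real (Suc k) / 2 * g s"
      unfolding W_def iter by simp
    also have "\<dots> = mid (W k) (U (W k)) s"
      unfolding TV mid_def U_def W_def by (simp add: algebra_simps)
    finally show "W (Suc k) s = mid (W k) (U (W k)) s" .
  qed
  have Ufix: "U h = h" unfolding U_def using fixh by simp
  have Une: "dd (U a) (U b) \<le> dd a b" for a b
    unfolding U_def dd_def[of "\<lambda>s. T_opt P r a s - g s"]
  proof (rule sn_le)
    fix s
    show "\<bar>T_opt P r a s - g s - (T_opt P r b s - g s)\<bar> \<le> dd a b"
      using T_opt_nonexp[OF mdp, of r a s b] by simp
  qed
  have KM: "dd (W k) (U (W k)) \<le> 2 * dd (W 0) h * Ef k k" for k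
    using KM_abstract[where mid = mid and dd = dd and U = U and p = h and x = W, OF dd_tri dd_sym dd_rfl dd_conv Une Ufix Wit] .
  have W0: "W 0 = V 0" unfolding W_def by simp
  show ?thesis
  proof (intro allI impI conjI)
    fix k :: nat assume k: "1 \<le> k"
    have E: "(\<lambda>s. T_opt P r (V k) s - V k s - g s) = (\<lambda>s. U (W k) s - W k s)"
      unfolding TV U_def W_def by (simp add: algebra_simps)
    have "sup_norm (\<lambda>s. T_opt P r (V k) s - V k s - g s) = dd (W k) (U (W k))"
      unfolding E by (simp add: dd_def[symmetric] dd_sym)
    also have "\<dots> \<le> 2 * dd (V 0) h * Ef k k" using KM[of k] W0 by simp
    also have "\<dots> \<le> 2 * dd (V 0) h * (2 * (1 / sqrt (pi * k)))"
    proof -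
      have "Ef k k \<le> 2 * cc k" using Ef_diag[OF k] unfolding cc_def .
      also have "\<dots> \<le> 2 * (1 / sqrt (pi * k))" using cc_bound[OF k] by simp
      finally show ?thesis
        by (intro mult_left_mono) (auto simp: dd_def sn_nonneg)
    qed
    also have "\<dots> = 4 * sup_norm (\<lambda>s. V 0 s - h s) / sqrt (pi * real k)"
      unfolding dd_def by simp
    finally show "sup_norm (\<lambda>s. T_opt P r (V k) s - V k s - g s)
      \<le> 4 * sup_norm (\<lambda>s. V 0 s - h s) / sqrt (pi * real k)" .
    show "sup_norm (\<lambda>s. g s - gain P r (pol k) s)
      \<le> sup_norm (\<lambda>s. T_opt P r (V k) s - V k s - g s)"
      by (rule sn_le, rule gain_bound[OF mdp pol_ok[OF k] inv[OF pol_ok[OF k]] greedy[OF k]])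
  qed
qed

end
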